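(* Let $E_1,\dots,E_m\in\mathcal L_\Box$ and let $a_1,\dots,a_m$ be pairwise distinct atoms such that every occurrence of each $a_i$ in each $E_j$ lies within the scope of some $\Box$. Then there is a map $\tau$ from atoms to formulas, extended to all formulas by fixing $\bot$ and commuting with $\wedge,\vee,\to,\Box$, such that: (1) $\mathsf{iGL}\vdash\tau(E_i)\leftrightarrow\tau(a_i)$ for every $1\le i\le m$; (2) $\tau(a)=a$ for every atom $a\notin\{a_1,\dots,a_m\}$; (3) for each $i$, every atom occurring in $\tau(a_i)$ occurs in some $E_j$ and is distinct from all of $a_1,\dots,a_m$.
   Context: The modal language $\mathcal L_\Box$ is built from countably many propositional variables, countably many propositional parameters (variables and parameters together are called atoms), the constant $\bot$, the binary connectives $\wedge,\vee,\to$ and the unary modality $\Box$. $\mathsf{iGL}$ is the least set of $\mathcal L_\Box$-formulas closed under modus ponens that contains every instance of the axiom schemata of intuitionistic propositional logic $\mathsf{IPC}$, of $\Box(A\to B)\to(\Box A\to\Box B)$, of $\Box A\to\Box\Box A$, of the Löb schema $\Box(\Box A\to A)\to\Box A$, and of $p\to\Box p$ for every parameter $p$, together with $\Box\varphi$ for every such instance $\varphi$. *)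

theory Defs
  imports Main
begin

datatype atom = PVar nat | PPar nat

datatype fm = At atom | Bot | And fm fm | Or fm fm | Imp fm fm | Box fm

definition Iff :: "fm \<Rightarrow> fm \<Rightarrow> fm" where
  "Iff A B = And (Imp A B) (Imp B A)"

inductive ipc_ax :: "fm \<Rightarrow> bool" where
  K1: "ipc_ax (Imp A (Imp B A))"
| S: "ipc_ax (Imp (Imp A (Imp B C)) (Imp (Imp A B) (Imp A C)))"
| AndE1: "ipc_ax (Imp (And A B) A)"
| AndE2: "ipc_ax (Imp (And A B) B)"
| AndI: "ipc_ax (Imp A (Imp B (And A B)))"
| OrI1: "ipc_ax (Imp A (Or A B))"
| OrI2: "ipc_ax (Imp B (Or A B))"
| OrE: "ipc_ax (Imp (Imp A C) (Imp (Imp B C) (Imp (Or A B) C)))"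
| EFQ: "ipc_ax (Imp Bot A)"

inductive igl_ax :: "fm \<Rightarrow> bool" where
  ipc: "ipc_ax A \<Longrightarrow> igl_ax A"
| distK: "igl_ax (Imp (Box (Imp A B)) (Imp (Box A) (Box B)))"
| four: "igl_ax (Imp (Box A) (Box (Box A)))"
| loeb: "igl_ax (Imp (Box (Imp (Box A) A)) (Box A))"
| par: "igl_ax (Imp (At (PPar n)) (Box (At (PPar n))))"

inductive iGL :: "fm \<Rightarrow> bool" where
  ax: "igl_ax A \<Longrightarrow> iGL A"
| boxax: "igl_ax A \<Longrightarrow> iGL (Box A)"
| mp: "iGL A \<Longrightarrow> iGL (Imp A B) \<Longrightarrow> iGL B"

fun subst :: "(atom \<Rightarrow> fm) \<Rightarrow> fm \<Rightarrow> fm" where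
  "subst \<tau> (At a) = \<tau> a"
| "subst \<tau> Bot = Bot"
| "subst \<tau> (And A B) = And (subst \<tau> A) (subst \<tau> B)"
| "subst \<tau> (Or A B) = Or (subst \<tau> A) (subst \<tau> B)"
| "subst \<tau> (Imp A B) = Imp (subst \<tau> A) (subst \<tau> B)"
| "subst \<tau> (Box A) = Box (subst \<tau> A)"

fun atoms :: "fm \<Rightarrow> atom set" where
  "atoms (At a) = {a}"
| "atoms Bot = {}"
| "atoms (And A B) = atoms A \<union> atoms B"
| "atoms (Or A B) = atoms A \<union> atoms B"
| "atoms (Imp A B) = atoms A \<union> atoms B"
| "atoms (Box A) = atoms A"

fun guarded :: "atom \<Rightarrow> fm \<Rightarrow> bool" where
  "guarded a (At b) = (b \<noteq> a)"
| "guarded a Bot = True"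
| "guarded a (And A B) = (guarded a A \<and> guarded a B)"
| "guarded a (Or A B) = (guarded a A \<and> guarded a B)"
| "guarded a (Imp A B) = (guarded a A \<and> guarded a B)"
| "guarded a (Box A) = True"

end

theory Submission
  imports Defs "HOL-Library.Countable" "HOL-Library.Infinite_Set"
begin


abbreviation TT :: fm where "TT \<equiv> Imp Bot Bot"

lemma ax_K: "iGL (Imp A (Imp B A))" by (intro iGL.ax igl_ax.ipc ipc_ax.K1)
lemma ax_S: "iGL (Imp (Imp A (Imp B C)) (Imp (Imp A B) (Imp A C)))" by (intro iGL.ax igl_ax.ipc ipc_ax.S)
lemma ax_AndE1: "iGL (Imp (And A B) A)" by (intro iGL.ax igl_ax.ipc ipc_ax.AndE1)
lemma ax_AndE2: "iGL (Imp (And A B) B)" by (intro iGL.ax igl_ax.ipc ipc_ax.AndE2)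
lemma ax_AndI: "iGL (Imp A (Imp B (And A B)))" by (intro iGL.ax igl_ax.ipc ipc_ax.AndI)
lemma ax_OrI1: "iGL (Imp A (Or A B))" by (intro iGL.ax igl_ax.ipc ipc_ax.OrI1)
lemma ax_OrI2: "iGL (Imp B (Or A B))" by (intro iGL.ax igl_ax.ipc ipc_ax.OrI2)
lemma ax_OrE: "iGL (Imp (Imp A C) (Imp (Imp B C) (Imp (Or A B) C)))" by (intro iGL.ax igl_ax.ipc ipc_ax.OrE)
lemma ax_distK: "iGL (Imp (Box (Imp A B)) (Imp (Box A) (Box B)))" by (intro iGL.ax igl_ax.distK)
lemma ax_four: "iGL (Imp (Box A) (Box (Box A)))" by (intro iGL.ax igl_ax.four)
lemma ax_loeb: "iGL (Imp (Box (Imp (Box A) A)) (Box A))" by (intro iGL.ax igl_ax.loeb)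

lemma iGL_nec: "iGL A \<Longrightarrow> iGL (Box A)"
proof (induction rule: iGL.induct)
  case (ax A) thus ?case by (rule iGL.boxax)
next
  case (boxax A) thus ?case by (meson iGL.mp ax_four iGL.boxax)
next
  case (mp A B) thus ?case by (meson iGL.mp ax_distK)
qed

lemma iGL_id: "iGL (Imp A A)"
  by (meson iGL.mp ax_S ax_K)

inductive dv :: "fm set \<Rightarrow> fm \<Rightarrow> bool" where
  hyp: "A \<in> G \<Longrightarrow> dv G A"
| thmd: "iGL A \<Longrightarrow> dv G A"
| mpd: "dv G A \<Longrightarrow> dv G (Imp A B) \<Longrightarrow> dv G B"

lemma dv_ded: "dv (insert A G) B \<Longrightarrow> dv G (Imp A B)"
proof (induction "insert A G" B rule: dv.induct)
  case (hyp B)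
  then show ?case
  proof
    assume "B = A" thus ?thesis using iGL_id dv.thmd by blast
  next
    assume "B \<in> G" thus ?thesis by (rule dv.mpd[OF dv.hyp dv.thmd[OF ax_K]])
  qed
next
  case (thmd B) thus ?case by (rule dv.mpd[OF dv.thmd dv.thmd[OF ax_K]])
next
  case (mpd B C) thus ?case by (meson dv.mpd[OF _ dv.mpd[OF _ dv.thmd[OF ax_S]]])
qed

lemma dv_iGL: "dv {} A \<Longrightarrow> iGL A"
  by (induction "{}::fm set" A rule: dv.induct) (auto intro: iGL.mp)

lemma dv_mono: "dv G A \<Longrightarrow> G \<subseteq> H \<Longrightarrow> dv H A"
  by (induction rule: dv.induct) (auto intro: dv.intros)

lemma dv_weak: "dv G A \<Longrightarrow> dv (insert X G) A"
  by (erule dv_mono) blast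

lemma hyp1: "dv (insert A G) A" by (rule dv.hyp) simp
lemma hyp2: "dv (insert B (insert A G)) A" by (rule dv.hyp) simp

lemma dv_ax: "iGL (Imp A B) \<Longrightarrow> dv G A \<Longrightarrow> dv G B"
  by (rule dv.mpd[OF _ dv.thmd])

lemma conjI_d: "dv G A \<Longrightarrow> dv G B \<Longrightarrow> dv G (And A B)"
  by (rule dv.mpd[OF _ dv.mpd[OF _ dv.thmd[OF ax_AndI]]])
lemma conjE1_d: "dv G (And A B) \<Longrightarrow> dv G A" by (rule dv_ax[OF ax_AndE1])
lemma conjE2_d: "dv G (And A B) \<Longrightarrow> dv G B" by (rule dv_ax[OF ax_AndE2])
lemma iffI_d: "dv G (Imp A B) \<Longrightarrow> dv G (Imp B A) \<Longrightarrow> dv G (Iff A B)"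
  unfolding Iff_def by (rule conjI_d)
lemma iffD1_d: "dv G (Iff A B) \<Longrightarrow> dv G (Imp A B)" unfolding Iff_def by (rule conjE1_d)
lemma iffD2_d: "dv G (Iff A B) \<Longrightarrow> dv G (Imp B A)" unfolding Iff_def by (rule conjE2_d)
lemma iff_refl_d: "dv G (Iff A A)" by (intro iffI_d dv.thmd iGL_id)
lemma disjI1_d: "dv G A \<Longrightarrow> dv G (Or A B)" by (rule dv_ax[OF ax_OrI1])
lemma disjI2_d: "dv G B \<Longrightarrow> dv G (Or A B)" by (rule dv_ax[OF ax_OrI2])
lemma disjE_d: "dv G (Or A B) \<Longrightarrow> dv (insert A G) C \<Longrightarrow> dv (insert B G) C \<Longrightarrow> dv G C"
  by (rule dv.mpd[OF _ dv.mpd[OF dv_ded dv.mpd[OF dv_ded dv.thmd[OF ax_OrE]]]])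

lemma box_K_d: "dv G (Box (Imp A B)) \<Longrightarrow> dv G (Box A) \<Longrightarrow> dv G (Box B)"
  by (rule dv.mpd[OF _ dv.mpd[OF _ dv.thmd[OF ax_distK]]])
lemma box_thm_d: "iGL A \<Longrightarrow> dv G (Box A)" by (intro dv.thmd iGL_nec)
lemma four_d: "dv G (Box A) \<Longrightarrow> dv G (Box (Box A))" by (rule dv_ax[OF ax_four])
lemma box_mono_d: "iGL (Imp A B) \<Longrightarrow> dv G (Box A) \<Longrightarrow> dv G (Box B)"
  by (rule box_K_d[OF box_thm_d])
lemma box_and_d: "dv G (Box A) \<Longrightarrow> dv G (Box B) \<Longrightarrow> dv G (Box (And A B))"
  by (rule box_K_d[OF box_K_d[OF box_thm_d[OF ax_AndI]]])
lemma box_iff_d: "dv G (Box (Iff A B)) \<Longrightarrow> dv G (Iff (Box A) (Box B))"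
proof -
  assume h: "dv G (Box (Iff A B))"
  have 1: "dv G (Box (Imp A B))" using box_mono_d[OF ax_AndE1] h unfolding Iff_def .
  have 2: "dv G (Box (Imp B A))" using box_mono_d[OF ax_AndE2] h unfolding Iff_def .
  show ?thesis
    apply (rule iffI_d)
     apply (rule dv_ded, rule box_K_d[OF dv_weak[OF 1]], rule dv.hyp, simp)
    apply (rule dv_ded, rule box_K_d[OF dv_weak[OF 2]], rule dv.hyp, simp)
    done
qed
lemma loeb_rule: "iGL (Imp (Box A) A) \<Longrightarrow> iGL A"
  by (meson iGL.mp iGL_nec ax_loeb)

lemma repl:
  assumes HB: "dv {H} (Box H)"
  shows "(\<And>b. b \<in> atoms A \<Longrightarrow> dv {H} (Iff (s b) (s' b))) \<Longrightarrow> dv {H} (Iff (subst s A) (subst s' A))"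
proof (induction A)
  case (At x) thus ?case by simp
next
  case Bot thus ?case by (simp add: iff_refl_d)
next
  case (And A B)
  then have a: "dv {H} (Iff (subst s A) (subst s' A))" and b: "dv {H} (Iff (subst s B) (subst s' B))" by auto
  show ?case
    apply (simp, intro iffI_d dv_ded conjI_d)
       apply (rule dv.mpd[OF _ dv_weak[OF iffD1_d[OF a]]], rule conjE1_d[OF hyp1])
      apply (rule dv.mpd[OF _ dv_weak[OF iffD1_d[OF b]]], rule conjE2_d[OF hyp1])
     apply (rule dv.mpd[OF _ dv_weak[OF iffD2_d[OF a]]], rule conjE1_d[OF hyp1])
    apply (rule dv.mpd[OF _ dv_weak[OF iffD2_d[OF b]]], rule conjE2_d[OF hyp1])
    done
next
  case (Or A B)
  then have a: "dv {H} (Iff (subst s A) (subst s' A))" and b: "dv {H} (Iff (subst s B) (subst s' B))" by auto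
  show ?case
    apply (simp, rule iffI_d)
     apply (rule dv_ded, rule disjE_d[OF hyp1])
      apply (rule disjI1_d, rule dv.mpd[OF hyp1 dv_weak[OF dv_weak[OF iffD1_d[OF a]]]])
     apply (rule disjI2_d, rule dv.mpd[OF hyp1 dv_weak[OF dv_weak[OF iffD1_d[OF b]]]])
    apply (rule dv_ded, rule disjE_d[OF hyp1])
     apply (rule disjI1_d, rule dv.mpd[OF hyp1 dv_weak[OF dv_weak[OF iffD2_d[OF a]]]])
    apply (rule disjI2_d, rule dv.mpd[OF hyp1 dv_weak[OF dv_weak[OF iffD2_d[OF b]]]])
    done
next
  case (Imp A B)
  then have a: "dv {H} (Iff (subst s A) (subst s' A))" and b: "dv {H} (Iff (subst s B) (subst s' B))" by auto
  show ?case
    apply (simp, rule iffI_d)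
     apply (rule dv_ded, rule dv_ded)
     apply (rule dv.mpd[OF _ dv_weak[OF dv_weak[OF iffD1_d[OF b]]]])
     apply (rule dv.mpd[OF _ hyp2])
     apply (rule dv.mpd[OF hyp1 dv_weak[OF dv_weak[OF iffD2_d[OF a]]]])
    apply (rule dv_ded, rule dv_ded)
    apply (rule dv.mpd[OF _ dv_weak[OF dv_weak[OF iffD2_d[OF b]]]])
    apply (rule dv.mpd[OF _ hyp2])
    apply (rule dv.mpd[OF hyp1 dv_weak[OF dv_weak[OF iffD1_d[OF a]]]])
    done
next
  case (Box C)
  then have c: "dv {H} (Iff (subst s C) (subst s' C))" by auto
  have "iGL (Imp H (Iff (subst s C) (subst s' C)))" using dv_iGL dv_ded c by blast
  from box_mono_d[OF this HB] show ?case by (simp add: box_iff_d)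
qed

lemma dv_iGL_imp: "dv {A} B \<Longrightarrow> iGL (Imp A B)"
  by (rule dv_iGL, rule dv_ded) simp

lemma onebox:
  "iGL (Iff (Box (subst (s(p:=TT)) D)) (Box (subst (s(p:=Box (subst (s(p:=TT)) D))) D)))"
proof -
  define Dt where "Dt = subst (s(p:=TT)) D"
  define X where "X = Box Dt"
  define Dx where "Dx = subst (s(p:=X)) D"
  define H where "H = And X (Box X)"
  have xh: "dv {H} X" unfolding H_def by (rule conjE1_d[OF hyp1])
  have HB: "dv {H} (Box H)" unfolding H_def X_def
    by (rule box_and_d[OF conjE2_d[OF hyp1] four_d[OF conjE2_d[OF hyp1]]])
  have "dv {H} (Iff ((s(p:=TT)) b) ((s(p:=X)) b))" for b
  proof (cases "b = p")
    case True
    show ?thesis using True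
      apply simp
      apply (rule iffI_d)
      apply (rule dv_ded[OF dv_weak[OF xh]])
      apply (rule dv_ded) apply (rule dv.thmd[OF iGL_id])
      done
  qed (simp add: iff_refl_d)
  from repl[OF HB this] have R: "dv {H} (Iff Dt Dx)" unfolding Dt_def Dx_def .
  have RH: "iGL (Imp H (Iff Dt Dx))" using R by (rule dv_iGL_imp)
  have K1: "iGL (Imp (Box X) (Iff X (Box Dx)))"
  proof -
    have "dv {Box X} (Box H)" unfolding H_def
      by (rule box_and_d[OF hyp1 four_d[OF hyp1]])
    from box_mono_d[OF RH this] have "dv {Box X} (Iff X (Box Dx))"
      unfolding X_def by (rule box_iff_d)
    thus ?thesis by (rule dv_iGL_imp)
  qed
  have XY: "iGL (Imp X (Box Dx))"
  proof -
    have bx: "dv {X} (Box X)" unfolding X_def by (rule four_d[OF hyp1])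
    have "dv {X} (Iff X (Box Dx))" using dv_ax[OF K1 bx] .
    hence "dv {X} (Box Dx)" by (rule dv.mpd[OF hyp1 iffD1_d])
    thus ?thesis by (rule dv_iGL_imp)
  qed
  have YX: "iGL (Imp (Box Dx) X)"
  proof (rule loeb_rule)
    let ?Z = "Imp (Box Dx) X"
    let ?G = "insert (Box Dx) {Box ?Z}"
    have y: "dv ?G (Box Dx)" by (rule hyp1)
    have bx: "dv ?G (Box X)" by (rule box_K_d[OF hyp2 four_d[OF y]])
    have "dv ?G (Iff X (Box Dx))" using bx by (rule dv_ax[OF K1])
    hence "dv ?G X" by (rule dv.mpd[OF y iffD2_d])
    hence "dv {Box ?Z} ?Z" by (rule dv_ded)
    thus "iGL (Imp (Box ?Z) ?Z)" by (rule dv_iGL_imp)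
  qed
  have "iGL (Iff X (Box Dx))"
    by (rule dv_iGL, rule iffI_d[OF dv.thmd[OF XY] dv.thmd[OF YX]])
  thus ?thesis unfolding X_def Dx_def Dt_def .
qed



lemma subst_subst: "subst s (subst r A) = subst (\<lambda>b. subst s (r b)) A" by (induction A) auto
lemma subst_cong: "(\<And>b. b \<in> atoms A \<Longrightarrow> s b = s' b) \<Longrightarrow> subst s A = subst s' A" by (induction A) auto
lemma atoms_subst: "atoms (subst s A) = (\<Union>b\<in>atoms A. atoms (s b))" by (induction A) auto
lemma finite_atoms: "finite (atoms A)" by (induction A) auto

lemma equiv_subst:
  assumes "\<And>b. b \<in> atoms A \<Longrightarrow> iGL (Iff (s b) (s' b))"
  shows "iGL (Iff (subst s A) (subst s' A))"
proof -
  have "dv {TT} (Iff (subst s A) (subst s' A))"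
    by (rule repl[OF box_thm_d[OF iGL_id]]) (rule dv.thmd[OF assms])
  from iGL.mp[OF iGL_id dv_iGL_imp[OF this]] show ?thesis .
qed

lemma iff_sym: "iGL (Iff A B) \<Longrightarrow> iGL (Iff B A)"
  by (rule dv_iGL, rule iffI_d[OF iffD2_d iffD1_d]; rule dv.thmd)

lemma iff_trans: "iGL (Iff A B) \<Longrightarrow> iGL (Iff B C) \<Longrightarrow> iGL (Iff A C)"
proof -
  assume a: "iGL (Iff A B)" and b: "iGL (Iff B C)"
  show ?thesis
    apply (rule dv_iGL, rule iffI_d)
     apply (rule dv_ded, rule dv.mpd[OF _ dv.thmd[OF dv_iGL[OF iffD1_d[OF dv.thmd[OF b]]]]])
     apply (rule dv.mpd[OF hyp1 dv.thmd[OF dv_iGL[OF iffD1_d[OF dv.thmd[OF a]]]]])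
    apply (rule dv_ded, rule dv.mpd[OF _ dv.thmd[OF dv_iGL[OF iffD2_d[OF dv.thmd[OF a]]]]])
    apply (rule dv.mpd[OF hyp1 dv.thmd[OF dv_iGL[OF iffD2_d[OF dv.thmd[OF b]]]]])
    done
qed

definition qs :: "('i \<Rightarrow> atom) \<Rightarrow> 'i set \<Rightarrow> ('i \<Rightarrow> fm) \<Rightarrow> atom \<Rightarrow> fm" where
  "qs q I Q b = (if b \<in> q ` I then Q (inv_into I q b) else At b)"

lemma box_sys:
  assumes "finite I" "inj_on q I"
  shows "\<exists>Q. (\<forall>k\<in>I. iGL (Iff (Q k) (subst (qs q I Q) (Box (D k))))) \<and>
             (\<forall>k\<in>I. atoms (Q k) \<subseteq> (\<Union>j\<in>I. atoms (D j)) - q ` I)"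
  using assms
proof (induction I arbitrary: D rule: finite_induct)
  case empty
  show ?case by simp
next
  case (insert x I)
  define G where "G = subst (At(q x := TT)) (Box (D x))"
  define D' where "D' k = subst (At(q x := G)) (D k)" for k
  have injI: "inj_on q I" using insert.prems by (simp add: inj_on_insert)
  from insert.IH[OF injI, of D'] obtain Q0 where
    Q0e: "\<forall>k\<in>I. iGL (Iff (Q0 k) (subst (qs q I Q0) (Box (D' k))))" and
    Q0a: "\<forall>k\<in>I. atoms (Q0 k) \<subseteq> (\<Union>j\<in>I. atoms (D' j)) - q ` I" by blast
  define s0 where "s0 = qs q I Q0"
  define Q where "Q k = (if k = x then subst s0 G else Q0 k)" for k
  have qxI: "q x \<notin> q ` I" using insert.prems insert.hyps by (auto simp: inj_on_insert)
  have key: "qs q (insert x I) Q = (\<lambda>b. subst s0 ((At(q x := G)) b))"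
  proof (rule ext)
    fix b
    show "qs q (insert x I) Q b = subst s0 ((At(q x := G)) b)"
    proof (cases "b = q x")
      case True
      then show ?thesis using insert.prems
        by (simp add: qs_def Q_def inv_into_f_f)
    next
      case False
      show ?thesis
      proof (cases "b \<in> q ` I")
        case True
        then obtain k where k: "k \<in> I" "b = q k" by blast
        with insert.prems insert.hyps have "k \<noteq> x" by auto
        then show ?thesis using k False insert.prems injI
          by (simp add: qs_def Q_def s0_def inv_into_f_f)
      next
        case c: False
        then show ?thesis using False by (simp add: qs_def s0_def)
      qed
    qed
  qed
  have key2: "qs q (insert x I) Q = s0(q x := Q x)"
  proof (rule ext)
    fix b show "qs q (insert x I) Q b = (s0(q x := Q x)) b"
      using key by (cases "b = q x") (simp_all add: Q_def)
  qed
  have Qx: "Q x = Box (subst (s0(q x := TT)) (D x))"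
    unfolding Q_def G_def by (simp add: subst_subst, rule subst_cong, simp)
  have eq1: "\<forall>k\<in>insert x I. iGL (Iff (Q k) (subst (qs q (insert x I) Q) (Box (D k))))"
  proof
    fix k assume k: "k \<in> insert x I"
    show "iGL (Iff (Q k) (subst (qs q (insert x I) Q) (Box (D k))))"
    proof (cases "k = x")
      case True
      have "iGL (Iff (Q x) (Box (subst (s0(q x := Q x)) (D x))))"
        using onebox[of s0 "q x" "D x"] unfolding Qx .
      then show ?thesis using True key2 by simp
    next
      case False
      with k have kI: "k \<in> I" by simp
      have "subst (qs q (insert x I) Q) (Box (D k)) = subst s0 (Box (D' k))"
        unfolding key D'_def by (simp add: subst_subst)
      then show ?thesis using Q0e kI False by (simp add: Q_def s0_def)
    qed
  qed
  have aG: "atoms G \<subseteq> atoms (D x) - {q x}"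
    unfolding G_def by (auto simp: atoms_subst split: if_splits)
  have aD': "atoms (D' k) \<subseteq> (atoms (D k) - {q x}) \<union> atoms G" for k
    unfolding D'_def by (auto simp: atoms_subst split: if_splits)
  have a0: "\<forall>k\<in>I. atoms (Q0 k) \<subseteq> (\<Union>j\<in>insert x I. atoms (D j)) - q ` insert x I"
    using Q0a aD' aG by fastforce
  have ax: "atoms (Q x) \<subseteq> (\<Union>j\<in>insert x I. atoms (D j)) - q ` insert x I"
  proof
    fix c assume "c \<in> atoms (Q x)"
    then obtain b where b: "b \<in> atoms G" "c \<in> atoms (s0 b)"
      by (auto simp: Q_def atoms_subst)
    show "c \<in> (\<Union>j\<in>insert x I. atoms (D j)) - q ` insert x I"
    proof (cases "b \<in> q ` I")
      case True
      then obtain k where k: "k \<in> I" "b = q k" by blast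
      then have "s0 b = Q0 k" using injI by (simp add: s0_def qs_def inv_into_f_f)
      then show ?thesis using a0 k b by auto
    next
      case False
      then have "c = b" using b by (simp add: s0_def qs_def)
      then show ?thesis using b aG False by auto
    qed
  qed
  have "\<forall>k\<in>insert x I. atoms (Q k) \<subseteq> (\<Union>j\<in>insert x I. atoms (D j)) - q ` insert x I"
    using a0 ax by (simp add: Q_def)
  with eq1 show ?case by blast
qed



instance atom :: countable by countable_datatype
instance fm :: countable by countable_datatype

fun topbox :: "fm \<Rightarrow> fm set" where
  "topbox (At b) = {}"
| "topbox Bot = {}"
| "topbox (And A B) = topbox A \<union> topbox B"
| "topbox (Or A B) = topbox A \<union> topbox B"
| "topbox (Imp A B) = topbox A \<union> topbox B"
| "topbox (Box C) = {C}"

fun skel :: "(fm \<Rightarrow> atom) \<Rightarrow> fm \<Rightarrow> fm" where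
  "skel q (At b) = At b"
| "skel q Bot = Bot"
| "skel q (And A B) = And (skel q A) (skel q B)"
| "skel q (Or A B) = Or (skel q A) (skel q B)"
| "skel q (Imp A B) = Imp (skel q A) (skel q B)"
| "skel q (Box C) = At (q C)"

lemma finite_topbox: "finite (topbox E)" by (induction E) auto
lemma topbox_atoms: "C \<in> topbox E \<Longrightarrow> atoms C \<subseteq> atoms E" by (induction E) auto
lemma skel_atoms: "b \<in> atoms (skel q E) \<Longrightarrow>
   (b \<in> atoms E \<and> (\<forall>a. guarded a E \<longrightarrow> b \<noteq> a)) \<or> (\<exists>C\<in>topbox E. b = q C)"
  by (induction E) auto
lemma skel_subst: "inj q \<Longrightarrow> (\<forall>b\<in>atoms E. b \<notin> range q) \<Longrightarrow>
   subst (\<lambda>b. if b \<in> range q then Box (inv q b) else At b) (skel q E) = E"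
  by (induction E) auto

lemma iff_refl: "iGL (Iff A A)" by (rule dv_iGL, rule iff_refl_d)

theorem mainTheorem15:
  fixes m :: nat and E :: "nat \<Rightarrow> fm" and a :: "nat \<Rightarrow> atom"
  assumes "inj_on a {..<m}"
    and "\<forall>i<m. \<forall>j<m. guarded (a i) (E j)"
  shows "\<exists>\<tau> :: atom \<Rightarrow> fm.
     (\<forall>i<m. iGL (Iff (subst \<tau> (E i)) (subst \<tau> (At (a i))))) \<and>
     (\<forall>b. b \<notin> a ` {..<m} \<longrightarrow> \<tau> b = At b) \<and>
     (\<forall>i<m. \<forall>c \<in> atoms (\<tau> (a i)). (\<exists>j<m. c \<in> atoms (E j)) \<and> c \<notin> a ` {..<m})"
proof -
  note inja = assms(1) and guard = assms(2)
  define S where "S = (\<Union>j<m. atoms (E j)) \<union> a ` {..<m}"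
  have finS: "finite S" by (simp add: S_def finite_atoms)
  have "finite {k. PVar k \<in> S}"
    using finite_vimageI[OF finS, of PVar] by (simp add: vimage_def inj_on_def)
  then obtain N where N: "{k. PVar k \<in> S} \<subseteq> {..<N}" using finite_nat_bounded by blast
  define q where "q C = PVar (N + to_nat C)" for C :: fm
  have injq: "inj q" by (auto simp: inj_on_def q_def)
  have qS: "q C \<notin> S" for C using N by (auto simp: q_def)
  define I where "I = (\<Union>j<m. topbox (E j))"
  have finI: "finite I" by (simp add: I_def finite_topbox)
  define B where "B j = skel q (E j)" for j
  define ainv where "ainv = inv_into {..<m} a"
  have ainv: "i < m \<Longrightarrow> ainv (a i) = i" for i using inja by (simp add: ainv_def inv_into_f_f)
  have ainvm: "b \<in> a ` {..<m} \<Longrightarrow> ainv b < m" for b by (auto simp: ainv)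
  define sB where "sB b = (if b \<in> a ` {..<m} then B (ainv b) else At b)" for b
  define D where "D C = subst sB C" for C
  obtain Q where Qe: "\<forall>k\<in>I. iGL (Iff (Q k) (subst (qs q I Q) (Box (D k))))"
    and Qa: "\<forall>k\<in>I. atoms (Q k) \<subseteq> (\<Union>j\<in>I. atoms (D j)) - q ` I"
    using box_sys[OF finI inj_on_subset[OF injq subset_UNIV], of D] by blast
  define Qs where "Qs = qs q I Q"
  have QsI: "C \<in> I \<Longrightarrow> Qs (q C) = Q C" for C
    using injq by (simp add: Qs_def qs_def inv_into_f_f inj_on_subset)
  have QsN: "b \<notin> q ` I \<Longrightarrow> Qs b = At b" for b by (simp add: Qs_def qs_def)
  define \<tau> where "\<tau> b = (if b \<in> a ` {..<m} then subst Qs (B (ainv b)) else At b)" for b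
  have Sq: "b \<in> S \<Longrightarrow> b \<notin> range q" for b using qS by auto
  have ES: "j < m \<Longrightarrow> atoms (E j) \<subseteq> S" for j by (auto simp: S_def)
  have HB2: "b \<in> atoms (B j) \<Longrightarrow> j < m \<Longrightarrow>
      (b \<in> atoms (E j) \<and> b \<notin> a ` {..<m}) \<or> (\<exists>C\<in>topbox (E j). b = q C)" for b j
    using skel_atoms[of b q "E j"] guard unfolding B_def by blast
  have part1: "iGL (Iff (subst \<tau> (E i)) (subst \<tau> (At (a i))))" if i: "i < m" for i
  proof -
    have ta: "subst \<tau> (At (a i)) = subst Qs (B i)" using i by (simp add: \<tau>_def ainv)
    have "E i = subst (\<lambda>b. if b \<in> range q then Box (inv q b) else At b) (B i)"
    proof -
      have "\<forall>b\<in>atoms (E i). b \<notin> range q" using ES[OF i] Sq by blast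
      from skel_subst[OF injq this] show ?thesis unfolding B_def by simp
    qed
    then have "subst \<tau> (E i) = subst (\<lambda>b. subst \<tau> (if b \<in> range q then Box (inv q b) else At b)) (B i)"
      by (metis subst_subst)
    also have "iGL (Iff \<dots> (subst Qs (B i)))"
    proof (rule equiv_subst)
      fix b assume b: "b \<in> atoms (B i)"
      from HB2[OF b i] show "iGL (Iff (subst \<tau> (if b \<in> range q then Box (inv q b) else At b)) (Qs b))"
      proof
        assume h: "b \<in> atoms (E i) \<and> b \<notin> a ` {..<m}"
        then have "b \<in> S" using ES[OF i] by auto
        then have "b \<notin> range q" "b \<notin> q ` I" using Sq by auto
        then show ?thesis using h by (simp add: \<tau>_def QsN iff_refl)
      next
        assume "\<exists>C\<in>topbox (E i). b = q C"
        then obtain C where C: "C \<in> topbox (E i)" "b = q C" by blast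
        have CI: "C \<in> I" using C i by (auto simp: I_def)
        have e: "subst Qs (Box (D C)) = Box (subst \<tau> C)"
        proof -
          have "subst Qs (D C) = subst \<tau> C"
            unfolding D_def subst_subst
          proof (rule subst_cong)
            fix b' assume b': "b' \<in> atoms C"
            then have "b' \<in> S" using topbox_atoms[OF C(1)] ES[OF i] by auto
            then have "b' \<notin> q ` I" using Sq by auto
            then show "subst Qs (sB b') = \<tau> b'" by (simp add: sB_def \<tau>_def QsN)
          qed
          then show ?thesis by simp
        qed
        have "iGL (Iff (Q C) (subst Qs (Box (D C))))" using Qe CI unfolding Qs_def by blast
        then have "iGL (Iff (Q C) (Box (subst \<tau> C)))" by (simp only: e)
        then show ?thesis using C CI injq by (simp add: QsI iff_sym)
      qed
    qed
    finally show ?thesis using ta by simp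
  qed
  define Good where "Good = {c. (\<exists>j<m. c \<in> atoms (E j)) \<and> c \<notin> a ` {..<m}}"
  have HB3: "b \<in> atoms (B j) \<Longrightarrow> j < m \<Longrightarrow> b \<notin> q ` I \<Longrightarrow> b \<in> Good" for b j
    using HB2[of b j] unfolding Good_def I_def by blast
  have DG: "atoms (D C) - q ` I \<subseteq> Good" if C: "C \<in> I" for C
  proof
    fix c assume c: "c \<in> atoms (D C) - q ` I"
    from C obtain j0 where j0: "j0 < m" "C \<in> topbox (E j0)" by (auto simp: I_def)
    from c obtain b where b: "b \<in> atoms C" "c \<in> atoms (sB b)"
      by (auto simp: D_def atoms_subst)
    show "c \<in> Good"
    proof (cases "b \<in> a ` {..<m}")
      case True
      then have "c \<in> atoms (B (ainv b))" using b by (simp add: sB_def)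
      then show ?thesis using HB3 ainvm[OF True] c by blast
    next
      case False
      then have "c = b" using b by (simp add: sB_def)
      then show ?thesis using False b topbox_atoms[OF j0(2)] j0(1) unfolding Good_def by blast
    qed
  qed
  have QG: "C \<in> I \<Longrightarrow> atoms (Q C) \<subseteq> Good" for C using Qa DG by blast
  have part3: "c \<in> Good" if i: "i < m" and c: "c \<in> atoms (\<tau> (a i))" for i c
  proof -
    from c i obtain b where b: "b \<in> atoms (B i)" "c \<in> atoms (Qs b)"
      by (auto simp: \<tau>_def ainv atoms_subst)
    show ?thesis
    proof (cases "b \<in> q ` I")
      case True
      then obtain C where "C \<in> I" "b = q C" by blast
      then show ?thesis using QG b QsI by auto
    next
      case False
      then show ?thesis using b HB3[OF b(1) i] QsN by simp
    qed
  qed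
  show ?thesis
    apply (rule exI[of _ \<tau>])
    using part1 part3 unfolding Good_def by (auto simp: \<tau>_def)
qed

end
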